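(* Let $\mathcal I$ be a chore allocation instance with agents $N=\{1,\dots,n\}$, chores $M$, additive valuations with $V_{ij}:=V_i(\{j\})\le0$ and $V_i(M)=-1$, and shares $s_i\in(0,1]$ summing to $1$. Let $\alpha^*$ be the optimal value of the integer program $$\min\ \alpha\quad\text{s.t.}\quad \sum_{j\in M}V_{ij}x_{ij}\ge\alpha\,\mathsf{WMMS}_i\ (\forall i),\ \ \sum_{i\in N}x_{ij}=1\ (\forall j),\ \ x_{ij}\in\{0,1\},\ \ \alpha\ge1.$$ Let $c^*=\min\{c\ge0:\ \mathcal P \text{ with } t_i=w_i=c\,\mathsf{WMMS}_i \text{ for all } i \text{ has a feasible solution}\}$, where $\mathcal P$ is the linear system in variables $x_{ij}$ ($i\in N$, $j\in M_i$), with $M_i=\{j\in M: V_{ij}\ge t_i\}$ and $N_j=\{i: j\in M_i\}$: $$\sum_{j\in M_i}V_{ij}x_{ij}\ge w_i\ (\forall i),\qquad \sum_{i\in N_j}x_{ij}=1\ (\forall j),\qquad x_{ij}\ge0.$$ Then $\alpha^*\ge c^*$.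
   Context: $\mathsf{WMMS}_i:=\max_{\langle Y_1,\dots,Y_n\rangle}\min_{k\in N}V_i(Y_k)\frac{s_i}{s_k}$, the maximum over all ordered partitions of $M$ into $n$ possibly empty bundles. $\alpha^*$ is the optimal WMMS (OWMMS) ratio: the smallest $\alpha\ge1$ for which an allocation with $V_i(X_i)\ge\alpha\,\mathsf{WMMS}_i$ for all $i$ exists. *)

theory Defs
  imports Complex_Main "HOL-Library.FuncSet"
begin

text \<open>Ordered partitions of M into bundles indexed by the agents N (possibly empty)
  are represented by assignment functions p in M ->E N; bundle Y_k = {j in M. p j = k}.\<close>

definition WMMS :: "'a set \<Rightarrow> 'b set \<Rightarrow> ('a \<Rightarrow> 'b \<Rightarrow> real) \<Rightarrow> ('a \<Rightarrow> real) \<Rightarrow> 'a \<Rightarrow> real" where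
  "WMMS N M V s i =
     Max ((\<lambda>p. Min ((\<lambda>k. (\<Sum>j\<in>{j\<in>M. p j = k}. V i j) * (s i / s k)) ` N)) ` (M \<rightarrow>\<^sub>E N))"

definition alpha_star :: "'a set \<Rightarrow> 'b set \<Rightarrow> ('a \<Rightarrow> 'b \<Rightarrow> real) \<Rightarrow> ('a \<Rightarrow> real) \<Rightarrow> real" where
  "alpha_star N M V s = Inf {\<alpha>. \<alpha> \<ge> 1 \<and>
     (\<exists>x :: 'a \<Rightarrow> 'b \<Rightarrow> real.
        (\<forall>i\<in>N. \<forall>j\<in>M. x i j \<in> {0, 1}) \<and>
        (\<forall>j\<in>M. (\<Sum>i\<in>N. x i j) = 1) \<and>
        (\<forall>i\<in>N. (\<Sum>j\<in>M. V i j * x i j) \<ge> \<alpha> * WMMS N M V s i))}"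

definition Mi :: "'b set \<Rightarrow> ('a \<Rightarrow> 'b \<Rightarrow> real) \<Rightarrow> ('a \<Rightarrow> real) \<Rightarrow> 'a \<Rightarrow> 'b set" where
  "Mi M V t i = {j\<in>M. V i j \<ge> t i}"

definition Nj :: "'a set \<Rightarrow> 'b set \<Rightarrow> ('a \<Rightarrow> 'b \<Rightarrow> real) \<Rightarrow> ('a \<Rightarrow> real) \<Rightarrow> 'b \<Rightarrow> 'a set" where
  "Nj N M V t j = {i\<in>N. j \<in> Mi M V t i}"

definition P_feasible :: "'a set \<Rightarrow> 'b set \<Rightarrow> ('a \<Rightarrow> 'b \<Rightarrow> real) \<Rightarrow> ('a \<Rightarrow> real) \<Rightarrow> ('a \<Rightarrow> real) \<Rightarrow> bool" where
  "P_feasible N M V t w \<longleftrightarrow> (\<exists>x :: 'a \<Rightarrow> 'b \<Rightarrow> real.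
      (\<forall>i\<in>N. \<forall>j\<in>Mi M V t i. x i j \<ge> 0) \<and>
      (\<forall>i\<in>N. (\<Sum>j\<in>Mi M V t i. V i j * x i j) \<ge> w i) \<and>
      (\<forall>j\<in>M. (\<Sum>i\<in>Nj N M V t j. x i j) = 1))"

definition c_star :: "'a set \<Rightarrow> 'b set \<Rightarrow> ('a \<Rightarrow> 'b \<Rightarrow> real) \<Rightarrow> ('a \<Rightarrow> real) \<Rightarrow> real" where
  "c_star N M V s = Inf {c. c \<ge> 0 \<and>
     P_feasible N M V (\<lambda>i. c * WMMS N M V s i) (\<lambda>i. c * WMMS N M V s i)}"

end

theory Submission
  imports Defs
begin

lemma WMMS_neg:
  fixes N :: "'a set" and M :: "'b set"
    and V :: "'a \<Rightarrow> 'b \<Rightarrow> real" and s :: "'a \<Rightarrow> real"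
  assumes "finite N" and "N \<noteq> {}" and "finite M"
    and V0: "\<And>i j. i \<in> N \<Longrightarrow> j \<in> M \<Longrightarrow> V i j \<le> 0"
    and V1: "\<And>i. i \<in> N \<Longrightarrow> (\<Sum>j\<in>M. V i j) = -1"
    and sp: "\<And>i. i \<in> N \<Longrightarrow> 0 < s i \<and> s i \<le> 1"
    and i: "i \<in> N"
  shows "WMMS N M V s i < 0"
proof -
  have fin: "finite (M \<rightarrow>\<^sub>E N)" using assms by (simp add: finite_PiE)
  have ne: "M \<rightarrow>\<^sub>E N \<noteq> {}" using assms by (simp add: PiE_eq_empty_iff)
  have "\<forall>a \<in> (\<lambda>p. Min ((\<lambda>k. (\<Sum>j\<in>{j\<in>M. p j = k}. V i j) * (s i / s k)) ` N)) ` (M \<rightarrow>\<^sub>E N). a < 0"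
  proof
    fix a assume "a \<in> (\<lambda>p. Min ((\<lambda>k. (\<Sum>j\<in>{j\<in>M. p j = k}. V i j) * (s i / s k)) ` N)) ` (M \<rightarrow>\<^sub>E N)"
    then obtain p where p: "p \<in> M \<rightarrow>\<^sub>E N" and a: "a = Min ((\<lambda>k. (\<Sum>j\<in>{j\<in>M. p j = k}. V i j) * (s i / s k)) ` N)" by auto
    have "(\<Sum>k\<in>N. (\<Sum>j\<in>{j\<in>M. p j = k}. V i j)) = (\<Sum>j\<in>M. V i j)"
      using sum.group[OF assms(3) assms(1), of p "V i"] p by (auto simp: PiE_iff)
    also have "\<dots> = -1" using V1 i by simp
    finally have tot: "(\<Sum>k\<in>N. (\<Sum>j\<in>{j\<in>M. p j = k}. V i j)) = -1" .
    have "\<exists>k\<in>N. (\<Sum>j\<in>{j\<in>M. p j = k}. V i j) < 0"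
    proof (rule ccontr)
      assume "\<not> ?thesis"
      hence h: "\<forall>k\<in>N. (\<Sum>j\<in>{j\<in>M. p j = k}. V i j) \<ge> 0" by (simp add: not_less)
      have "(\<Sum>k\<in>N. (\<Sum>j\<in>{j\<in>M. p j = k}. V i j)) \<ge> 0" by (rule sum_nonneg) (use h in blast)
      thus False using tot by simp
    qed
    then obtain k where k: "k \<in> N" "(\<Sum>j\<in>{j\<in>M. p j = k}. V i j) < 0" by blast
    have "s i / s k > 0" using sp i k by simp
    hence neg: "(\<Sum>j\<in>{j\<in>M. p j = k}. V i j) * (s i / s k) < 0" using k mult_neg_pos by blast
    have "a \<le> (\<Sum>j\<in>{j\<in>M. p j = k}. V i j) * (s i / s k)" unfolding a
      using k assms by (intro Min_le) auto
    thus "a < 0" using neg by linarith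
  qed
  thus ?thesis unfolding WMMS_def using fin ne by (subst Max_less_iff) auto
qed

lemma col_bound:
  fixes x :: "'a \<Rightarrow> 'b \<Rightarrow> real"
  assumes "finite M" and "j \<in> M"
    and V0: "\<And>j. j \<in> M \<Longrightarrow> V i j \<le> 0"
    and x01: "\<And>j. j \<in> M \<Longrightarrow> x i j \<in> {0, 1}"
  shows "(\<Sum>j\<in>M. V i j * x i j) \<le> V i j * x i j"
proof -
  have "(\<Sum>j\<in>M. V i j * x i j) = V i j * x i j + (\<Sum>j\<in>M - {j}. V i j * x i j)"
    using assms by (simp add: sum.remove)
  moreover have "(\<Sum>j\<in>M - {j}. V i j * x i j) \<le> 0"
  proof (rule sum_nonpos)
    fix j' assume "j' \<in> M - {j}"
    then have "V i j' \<le> 0" "x i j' \<ge> 0" using V0 x01[of j'] by auto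
    thus "V i j' * x i j' \<le> 0" by (simp add: mult_nonpos_nonneg)
  qed
  ultimately show ?thesis by linarith
qed

theorem lemma6:
  fixes N :: "'a set" and M :: "'b set"
    and V :: "'a \<Rightarrow> 'b \<Rightarrow> real" and s :: "'a \<Rightarrow> real"
  assumes "finite N" and "N \<noteq> {}" and "finite M"
    and "\<And>i j. i \<in> N \<Longrightarrow> j \<in> M \<Longrightarrow> V i j \<le> 0"
    and "\<And>i. i \<in> N \<Longrightarrow> (\<Sum>j\<in>M. V i j) = -1"
    and "\<And>i. i \<in> N \<Longrightarrow> 0 < s i \<and> s i \<le> 1"
    and "(\<Sum>i\<in>N. s i) = 1"
  shows "alpha_star N M V s \<ge> c_star N M V s"
proof -
  let ?W = "WMMS N M V s"
  define A where "A = {\<alpha>. \<alpha> \<ge> 1 \<and>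
     (\<exists>x :: 'a \<Rightarrow> 'b \<Rightarrow> real.
        (\<forall>i\<in>N. \<forall>j\<in>M. x i j \<in> {0, 1}) \<and>
        (\<forall>j\<in>M. (\<Sum>i\<in>N. x i j) = 1) \<and>
        (\<forall>i\<in>N. (\<Sum>j\<in>M. V i j * x i j) \<ge> \<alpha> * ?W i))}"
  define C where "C = {c. c \<ge> 0 \<and> P_feasible N M V (\<lambda>i. c * ?W i) (\<lambda>i. c * ?W i)}"
  have Wneg: "\<And>i. i \<in> N \<Longrightarrow> ?W i < 0" by (rule WMMS_neg[OF assms(1-6)])
  have "A \<noteq> {}"
  proof -
    obtain i0 where i0: "i0 \<in> N" using assms by blast
    define \<alpha> where "\<alpha> = max 1 (Max ((\<lambda>i. -1 / ?W i) ` N))"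
    define x :: "'a \<Rightarrow> 'b \<Rightarrow> real" where "x = (\<lambda>i j. if i = i0 then 1 else 0)"
    have "\<alpha> \<in> A" unfolding A_def
    proof (intro CollectI conjI exI[of _ x] ballI)
      show "1 \<le> \<alpha>" unfolding \<alpha>_def by simp
      fix i assume i: "i \<in> N"
      have ge: "\<alpha> \<ge> -1 / ?W i" unfolding \<alpha>_def using i assms
        by (meson Max_ge finite_imageI image_eqI max.coboundedI2)
      have "\<alpha> * ?W i \<le> (-1 / ?W i) * ?W i" using ge Wneg[OF i]
        by (intro mult_right_mono_neg) auto
      also have "\<dots> = -1" using Wneg[OF i] by simp
      finally have le: "\<alpha> * ?W i \<le> -1" .
      show "\<alpha> * ?W i \<le> (\<Sum>j\<in>M. V i j * x i j)"
      proof (cases "i = i0")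
        case True thus ?thesis using le assms(5)[OF i] by (simp add: x_def)
      next
        case False thus ?thesis using le by (simp add: x_def)
      qed
    next
      fix i j assume "i \<in> N" "j \<in> M" thus "x i j \<in> {0,1}" by (simp add: x_def)
    next
      fix j assume "j \<in> M" show "(\<Sum>i\<in>N. x i j) = 1"
        using i0 assms(1) by (simp add: x_def)
    qed
    thus ?thesis by blast
  qed
  moreover have "bdd_below C" unfolding C_def by (rule bdd_belowI[of _ 0]) auto
  moreover have "A \<subseteq> C"
  proof
    fix \<alpha> assume "\<alpha> \<in> A"
    then obtain x :: "'a \<Rightarrow> 'b \<Rightarrow> real" where a1: "\<alpha> \<ge> 1"
      and x01: "\<forall>i\<in>N. \<forall>j\<in>M. x i j \<in> {0, 1}"
      and xc: "\<forall>j\<in>M. (\<Sum>i\<in>N. x i j) = 1"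
      and xv: "\<forall>i\<in>N. (\<Sum>j\<in>M. V i j * x i j) \<ge> \<alpha> * ?W i"
      unfolding A_def by blast
    let ?t = "\<lambda>i. \<alpha> * ?W i"
    have zero: "x i j = 0" if "i \<in> N" "j \<in> M" "j \<notin> Mi M V ?t i" for i j
    proof (rule ccontr)
      assume "x i j \<noteq> 0"
      hence "x i j = 1" using x01 that by auto
      moreover have "(\<Sum>j\<in>M. V i j * x i j) \<le> V i j * x i j"
        using col_bound[of M j V i x] assms that x01 by auto
      moreover have "V i j < ?t i" using that by (auto simp: Mi_def)
      ultimately show False using xv that by auto
    qed
    have sub: "Mi M V ?t i \<subseteq> M" for i by (auto simp: Mi_def)
    have "P_feasible N M V ?t ?t" unfolding P_feasible_def
    proof (intro exI[of _ x] conjI ballI)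
      fix i j assume "i \<in> N" "j \<in> Mi M V ?t i"
      thus "0 \<le> x i j" using x01 sub by fastforce
    next
      fix i assume i: "i \<in> N"
      have "(\<Sum>j\<in>Mi M V ?t i. V i j * x i j) = (\<Sum>j\<in>M. V i j * x i j)"
        by (rule sum.mono_neutral_left) (use assms sub zero i in auto)
      thus "?t i \<le> (\<Sum>j\<in>Mi M V ?t i. V i j * x i j)" using xv i by simp
    next
      fix j assume j: "j \<in> M"
      have "(\<Sum>i\<in>Nj N M V ?t j. x i j) = (\<Sum>i\<in>N. x i j)"
        by (rule sum.mono_neutral_left) (use assms zero j in \<open>auto simp: Nj_def\<close>)
      thus "(\<Sum>i\<in>Nj N M V ?t j. x i j) = 1" using xc j by simp
    qed
    thus "\<alpha> \<in> C" unfolding C_def using a1 by simp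
  qed
  ultimately have "Inf C \<le> Inf A" by (rule cInf_superset_mono)
  thus ?thesis unfolding alpha_star_def c_star_def A_def C_def by simp
qed

end
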